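(* Let $\gamma\in(0,2)$, let $L$ be a positive measurable function slowly varying at infinity, and set $g(n)=n^{\gamma}L(n)$. Let $(n_k)_{k\ge0}$ be a nondecreasing sequence of positive integers with $n_k\to\infty$ and $\kappa:=\sup_k n_{k+1}/n_k<\infty$. Then the following are equivalent: (1) there exists $C>0$ such that $\operatorname{Var}(S_{n_k})\le C\,g(n_k)$ for all sufficiently large $k$; (2) there exist $C>0$ and $x_0\in(0,\pi]$ such that $G(x)\le C\,x^{2-\gamma}L(1/x)$ for all $0<x\le x_0$; (3) there exists $C>0$ such that $\operatorname{Var}(S_n)\le C\,g(n)$ for all sufficiently large $n$.
   Context: Let $X_1,X_2,\ldots$ be a sequence of centred, weakly stationary, real random variables with finite second moments. Its spectral measure is the finite Borel measure $F$ on $[-\pi,\pi]$ such that $\operatorname{Cov}(X_0,X_k)=\int_{-\pi}^{\pi}e^{\mathrm{i}tk}\,F(\mathrm{d}t)$ for all integers $k$; it is assumed that $F$ is symmetric about the origin. Define $G(x)=F([-x,x])$ for $0\le x\le\pi$, and $S_n=X_1+\cdots+X_n$. A positive measurable function $L$ is slowly varying at infinity if $L(\lambda x)/L(x)\to1$ as $x\to\infty$ for every $\lambda>0$. *)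

theory Defs
  imports "HOL-Probability.Probability"
begin

definition covariance :: "'a measure \<Rightarrow> ('a \<Rightarrow> real) \<Rightarrow> ('a \<Rightarrow> real) \<Rightarrow> real" where
  "covariance M X Y =
     integral\<^sup>L M (\<lambda>\<omega>. (X \<omega> - integral\<^sup>L M X) * (Y \<omega> - integral\<^sup>L M Y))"

definition slowly_varying :: "(real \<Rightarrow> real) \<Rightarrow> bool" where
  "slowly_varying L \<longleftrightarrow>
     L \<in> borel_measurable borel \<and> (\<forall>x>0. L x > 0) \<and>
     (\<forall>c>0. ((\<lambda>x. L (c * x) / L x) \<longlongrightarrow> 1) at_top)"

definition spectral_measure_of :: "'a measure \<Rightarrow> (nat \<Rightarrow> 'a \<Rightarrow> real) \<Rightarrow> real measure \<Rightarrow> bool" where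
  "spectral_measure_of M X F \<longleftrightarrow>
     sets F = sets borel \<and> finite_measure F \<and> emeasure F (- {-pi..pi}) = 0 \<and>
     (\<forall>A\<in>sets borel. emeasure F (uminus ` A) = emeasure F A) \<and>
     (\<forall>j\<ge>1. \<forall>k\<ge>1. complex_of_real (covariance M (X j) (X k)) =
        integral\<^sup>L F (\<lambda>t. cis (t * (real k - real j))))"

end

theory Submission
  imports Defs
begin


definition K :: "nat \<Rightarrow> real \<Rightarrow> real" where
  "K m t = (\<Sum>j=1..m. \<Sum>k=1..m. cos (t * (real k - real j)))"

lemma K_sq: "K m t = (\<Sum>j=1..m. cos (t * real j))\<^sup>2 + (\<Sum>j=1..m. sin (t * real j))\<^sup>2"
  unfolding K_def power2_eq_square sum_product
  by (simp add: right_diff_distrib cos_diff sum.distrib[symmetric] sum.swap[of _ "{1..m}" "{1..m}"] mult.commute)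

lemma K_nonneg: "0 \<le> K m t"
  unfolding K_sq by simp

lemma K_le_sq: "K m t \<le> real m ^ 2"
proof -
  have "K m t \<le> (\<Sum>j=1..m. \<Sum>k=1..m. (1::real))"
    unfolding K_def by (intro sum_mono) simp
  then show ?thesis by (simp add: power2_eq_square)
qed

lemma cos_lb: "1 - x\<^sup>2 / 2 \<le> cos (x::real)"
proof -
  have "cos x = cos (2 * (x/2))" by simp
  also have "\<dots> = 1 - 2 * (sin (x/2))\<^sup>2" by (rule cos_double_sin)
  also have "(sin (x/2))\<^sup>2 \<le> (x/2)\<^sup>2"
    using abs_sin_x_le_abs_x[of "x/2"] by (metis abs_ge_zero power2_abs power_mono)
  ultimately show ?thesis by (simp add: power_divide)
qed

lemma K_lower:
  assumes "m \<ge> 1" "\<bar>t\<bar> \<le> 1 / real m"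
  shows "real m ^ 2 / 2 \<le> K m t"
proof -
  have "(\<Sum>j=1..m. \<Sum>k=1..m. (1/2::real)) \<le> K m t"
    unfolding K_def
  proof (intro sum_mono)
    fix j k assume j: "j \<in> {1..m}" and k: "k \<in> {1..m}"
    have "\<bar>real k - real j\<bar> \<le> real m" using j k by auto
    have tm: "\<bar>t\<bar> * real m \<le> 1" using assms by (simp add: field_simps)
    have "\<bar>t * (real k - real j)\<bar> = \<bar>t\<bar> * \<bar>real k - real j\<bar>" by (simp add: abs_mult)
    also have "\<dots> \<le> \<bar>t\<bar> * real m" by (rule mult_left_mono) (use \<open>\<bar>real k - real j\<bar> \<le> real m\<close> in auto)
    finally have "\<bar>t * (real k - real j)\<bar> \<le> 1" using tm by linarith
    hence "(t * (real k - real j))\<^sup>2 \<le> 1"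
      by (metis abs_le_square_iff abs_one power_one)
    thus "1/2 \<le> cos (t * (real k - real j))" using cos_lb[of "t * (real k - real j)"] by linarith
  qed
  thus ?thesis by (simp add: power2_eq_square)
qed

lemma tele_cos: "2 * sin (t/2) * (\<Sum>j=1..m. cos (t * real j)) = sin ((real m + 1/2) * t) - sin (t/2)"
proof (induction m)
  case 0 then show ?case by simp
next
  case (Suc m)
  have e: "2 * sin (t/2) * cos (t * real (Suc m)) = sin ((real m + 1 + 1/2) * t) - sin ((real m + 1/2) * t)"
  proof -
    have a: "(real m + 1 + 1/2) * t = t * real (Suc m) + t/2" by (simp add: algebra_simps)
    have b: "(real m + 1/2) * t = t * real (Suc m) - t/2" by (simp add: algebra_simps)
    show ?thesis unfolding a b sin_add sin_diff by simp
  qed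
  show ?case using Suc e by (simp add: distrib_left del: of_nat_Suc) (simp add: algebra_simps)
qed

lemma tele_sin: "2 * sin (t/2) * (\<Sum>j=1..m. sin (t * real j)) = cos (t/2) - cos ((real m + 1/2) * t)"
proof (induction m)
  case 0 then show ?case by simp
next
  case (Suc m)
  have e: "2 * sin (t/2) * sin (t * real (Suc m)) = cos ((real m + 1/2) * t) - cos ((real m + 1 + 1/2) * t)"
  proof -
    have a: "(real m + 1 + 1/2) * t = t * real (Suc m) + t/2" by (simp add: algebra_simps)
    have b: "(real m + 1/2) * t = t * real (Suc m) - t/2" by (simp add: algebra_simps)
    show ?thesis unfolding a b cos_add cos_diff by simp
  qed
  show ?case using Suc e by (simp add: distrib_left del: of_nat_Suc) (simp add: algebra_simps)
qed




lemma sin_lb: fixes y :: real assumes "0 \<le> y" "y \<le> 2" shows "y / 4 \<le> sin y"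
proof -
  have b: "\<bar>sin y - (\<Sum>m<3. sin_coeff m * y ^ m)\<bar> \<le> inverse (fact 3) * \<bar>y\<bar> ^ 3"
    by (rule Maclaurin_sin_bound)
  have sc: "(\<Sum>m<3. sin_coeff m * (y::real) ^ m) = y"
    by (simp add: numeral_3_eq_3 sin_coeff_Suc cos_coeff_def)
  have f3: "fact 3 = (6::real)" by (simp add: numeral_3_eq_3)
  have b2: "\<bar>sin y - y\<bar> \<le> y^3 / 6" using b unfolding sc f3 using assms by (simp add: field_simps)
  have h: "y - y^3/6 \<le> sin y" using b2 abs_ge_minus_self[of "sin y - y"] by linarith
  have "y^2 \<le> 2^2" by (rule power_mono) (use assms in auto)
  hence "y * y^2 \<le> y * 4" using assms by (intro mult_left_mono) auto
  hence "y^3 \<le> y * 4" by (simp add: power2_eq_square power3_eq_cube)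
  thus ?thesis using h assms by linarith
qed

lemma K_upper:
  assumes "t \<noteq> 0" "\<bar>t\<bar> \<le> pi"
  shows "K m t \<le> 128 / t\<^sup>2"
proof -
  define s where "s = \<bar>sin (t/2)\<bar>"
  have "\<bar>t\<bar>/2 \<le> 2" using assms pi_less_4 by linarith
  hence "(\<bar>t\<bar>/2) / 4 \<le> sin (\<bar>t\<bar>/2)" by (intro sin_lb) auto
  moreover have "sin (\<bar>t\<bar>/2) = s"
  proof (cases "t \<ge> 0")
    case True
    have "0 \<le> sin (t/2)" using True assms by (intro sin_ge_zero) auto
    thus ?thesis using True by (simp add: s_def)
  next
    case False
    have "0 \<le> sin (-t/2)" using False assms by (intro sin_ge_zero) auto
    thus ?thesis using False by (simp add: s_def)
  qed
  ultimately have st: "\<bar>t\<bar> / 8 \<le> s" by simp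
  have tpos: "0 < \<bar>t\<bar>" using assms by simp
  hence spos: "0 < s" using st by linarith
  have b1: "s * \<bar>\<Sum>j=1..m. cos (t * real j)\<bar> \<le> 1"
  proof -
    have "\<bar>2 * sin (t/2) * (\<Sum>j=1..m. cos (t * real j))\<bar> \<le> 2"
      unfolding tele_cos using abs_sin_le_one[of "(real m + 1/2) * t"] abs_sin_le_one[of "t/2"] by linarith
    thus ?thesis by (simp add: s_def abs_mult)
  qed
  have b2: "s * \<bar>\<Sum>j=1..m. sin (t * real j)\<bar> \<le> 1"
  proof -
    have "\<bar>2 * sin (t/2) * (\<Sum>j=1..m. sin (t * real j))\<bar> \<le> 2"
      unfolding tele_sin using abs_cos_le_one[of "(real m + 1/2) * t"] abs_cos_le_one[of "t/2"] by linarith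
    thus ?thesis by (simp add: s_def abs_mult)
  qed
  have sq: "(\<bar>t\<bar>/8) * a \<le> 1" if "s * a \<le> 1" "0 \<le> a" for a
    using mult_right_mono[OF st that(2)] that(1) by linarith
  have c1: "(\<Sum>j=1..m. cos (t * real j))\<^sup>2 \<le> 64 / t\<^sup>2" 
  proof -
    define a where "a = \<bar>\<Sum>j=1..m. cos (t * real j)\<bar>"
    have "(\<bar>t\<bar>/8) * a \<le> 1" using sq b1 unfolding a_def by simp
    hence "a \<le> 8 / \<bar>t\<bar>" using tpos by (simp add: field_simps)
    hence "a^2 \<le> (8/\<bar>t\<bar>)^2" by (intro power_mono) (auto simp: a_def)
    thus ?thesis by (simp add: a_def power_divide)
  qed
  have c2: "(\<Sum>j=1..m. sin (t * real j))\<^sup>2 \<le> 64 / t\<^sup>2" 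
  proof -
    define a where "a = \<bar>\<Sum>j=1..m. sin (t * real j)\<bar>"
    have "(\<bar>t\<bar>/8) * a \<le> 1" using sq b2 unfolding a_def by simp
    hence "a \<le> 8 / \<bar>t\<bar>" using tpos by (simp add: field_simps)
    hence "a^2 \<le> (8/\<bar>t\<bar>)^2" by (intro power_mono) (auto simp: a_def)
    thus ?thesis by (simp add: a_def power_divide)
  qed
  show ?thesis unfolding K_sq using c1 c2 by simp
qed




lemma var_formula:
  fixes M :: "'a measure" and X :: "nat \<Rightarrow> 'a \<Rightarrow> real" and F :: "real measure"
  assumes P: "prob_space M"
    and meas: "\<And>i. i \<ge> 1 \<Longrightarrow> X i \<in> borel_measurable M"
    and sq: "\<And>i. i \<ge> 1 \<Longrightarrow> integrable M (\<lambda>\<omega>. (X i \<omega>)\<^sup>2)"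
    and mean: "\<And>i. i \<ge> 1 \<Longrightarrow> integral\<^sup>L M (X i) = 0"
    and spec: "spectral_measure_of M X F"
  shows "prob_space.variance M (\<lambda>\<omega>. \<Sum>i=1..m. X i \<omega>) = integral\<^sup>L F (K m)"
proof -
  interpret prob_space M by (rule P)
  have sF: "sets F = sets borel" and fF: "finite_measure F" using spec unfolding spectral_measure_of_def by auto
  have int: "integrable M (X i)" if "i \<ge> 1" for i
    using square_integrable_imp_integrable[OF meas[OF that] sq[OF that]] .
  have intp: "integrable M (\<lambda>\<omega>. X i \<omega> * X j \<omega>)" if "i \<ge> 1" "j \<ge> 1" for i j
  proof (rule Bochner_Integration.integrable_bound)
    show "integrable M (\<lambda>\<omega>. (X i \<omega>)\<^sup>2 + (X j \<omega>)\<^sup>2)" using sq that by auto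
    show "(\<lambda>\<omega>. X i \<omega> * X j \<omega>) \<in> borel_measurable M" using meas that by auto
    show "AE x in M. norm (X i x * X j x) \<le> norm ((X i x)\<^sup>2 + (X j x)\<^sup>2)"
    proof (intro AE_I2)
      fix x
      have "2 * \<bar>X i x\<bar> * \<bar>X j x\<bar> \<le> (X i x)\<^sup>2 + (X j x)\<^sup>2"
        using sum_squares_bound[of "\<bar>X i x\<bar>" "\<bar>X j x\<bar>"] by simp
      moreover have "\<bar>X i x\<bar> * \<bar>X j x\<bar> \<ge> 0" by simp
      ultimately have "\<bar>X i x\<bar> * \<bar>X j x\<bar> \<le> (X i x)\<^sup>2 + (X j x)\<^sup>2" by linarith
      thus "norm (X i x * X j x) \<le> norm ((X i x)\<^sup>2 + (X j x)\<^sup>2)"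
        by (simp add: abs_mult)
    qed
  qed
  have cov: "covariance M (X j) (X k) = integral\<^sup>L F (\<lambda>t. cos (t * (real k - real j)))"
    if "j \<ge> 1" "k \<ge> 1" for j k
  proof -
    have c: "complex_of_real (covariance M (X j) (X k)) = integral\<^sup>L F (\<lambda>t. cis (t * (real k - real j)))"
      using spec that unfolding spectral_measure_of_def by auto
    have ic: "integrable F (\<lambda>t. cis (t * (real k - real j)))"
    proof (rule finite_measure.integrable_const_bound[OF fF, where B=1])
      show "AE x in F. norm (cis (x * (real k - real j))) \<le> 1" by simp
      show "(\<lambda>t. cis (t * (real k - real j))) \<in> borel_measurable F"
        unfolding measurable_cong_sets[OF sF refl] cis_conv_exp
        by (intro borel_measurable_continuous_onI continuous_intros)
    qed
    have "covariance M (X j) (X k) = Re (integral\<^sup>L F (\<lambda>t. cis (t * (real k - real j))))"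
      using c by (metis Re_complex_of_real)
    also have "\<dots> = integral\<^sup>L F (\<lambda>t. Re (cis (t * (real k - real j))))"
      using integral_Re[OF ic] by simp
    finally show ?thesis by simp
  qed
  have covX: "covariance M (X j) (X k) = expectation (\<lambda>\<omega>. X j \<omega> * X k \<omega>)" if "j \<ge> 1" "k \<ge> 1" for j k
    unfolding covariance_def using mean that by simp
  have ES: "expectation (\<lambda>\<omega>. \<Sum>i=1..m. X i \<omega>) = 0"
    using int mean by (simp add: Bochner_Integration.integral_sum)
  have "prob_space.variance M (\<lambda>\<omega>. \<Sum>i=1..m. X i \<omega>) = expectation (\<lambda>\<omega>. (\<Sum>i=1..m. X i \<omega>)\<^sup>2)"
    unfolding ES by simp
  also have "\<dots> = expectation (\<lambda>\<omega>. \<Sum>j=1..m. \<Sum>k=1..m. X j \<omega> * X k \<omega>)"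
    by (simp add: power2_eq_square sum_product)
  also have "\<dots> = (\<Sum>j=1..m. \<Sum>k=1..m. expectation (\<lambda>\<omega>. X j \<omega> * X k \<omega>))"
  proof -
    have "expectation (\<lambda>\<omega>. \<Sum>j=1..m. \<Sum>k=1..m. X j \<omega> * X k \<omega>) = (\<Sum>j=1..m. expectation (\<lambda>\<omega>. \<Sum>k=1..m. X j \<omega> * X k \<omega>))"
      by (rule Bochner_Integration.integral_sum[where f="\<lambda>j \<omega>. \<Sum>k=1..m. X j \<omega> * X k \<omega>"]) (use intp in auto)
    also have "\<dots> = (\<Sum>j=1..m. \<Sum>k=1..m. expectation (\<lambda>\<omega>. X j \<omega> * X k \<omega>))"
      by (intro sum.cong refl Bochner_Integration.integral_sum[where f="\<lambda>k \<omega>. X _ \<omega> * X k \<omega>"]) (use intp in auto)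
    finally show ?thesis .
  qed
  also have "\<dots> = (\<Sum>j=1..m. \<Sum>k=1..m. integral\<^sup>L F (\<lambda>t. cos (t * (real k - real j))))"
    using cov covX by (intro sum.cong refl) auto
  also have "\<dots> = integral\<^sup>L F (K m)"
  proof -
    have icos: "integrable F (\<lambda>t. cos (t * (real k - real j)))" for j k
    proof (rule finite_measure.integrable_const_bound[OF fF, where B=1])
      show "AE x in F. norm (cos (x * (real k - real j))) \<le> 1" by simp
      show "(\<lambda>t. cos (t * (real k - real j))) \<in> borel_measurable F"
        unfolding measurable_cong_sets[OF sF refl] by measurable
    qed
    show ?thesis unfolding K_def using icos by (simp add: Bochner_Integration.integral_sum)
  qed
  finally show ?thesis .
qed




lemma K_dyadic:
  assumes m: "m \<ge> 1" and t: "\<bar>t\<bar> \<le> pi" and ti: "\<bar>t\<bar> \<le> 2^i / real m"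
  shows "K m t \<le> (\<Sum>j\<le>i. 512 * real m ^ 2 / 4^j * indicator {-(2^j / real m)..2^j / real m} t)"
  using ti
proof (induction i)
  case 0
  hence "indicator {-(2^0 / real m)..2^0 / real m} t = (1::real)" by (auto simp: indicator_def)
  moreover have "K m t \<le> 512 * real m ^ 2" using K_le_sq[of m t] zero_le_power2[of "real m"] by linarith
  ultimately show ?case by simp
next
  case (Suc i)
  have nn: "0 \<le> 512 * real m ^ 2 / 4^j * indicator {-(2^j / real m)..2^j / real m} t" for j
    by simp
  show ?case
  proof (cases "\<bar>t\<bar> \<le> 2^i / real m")
    case True
    then show ?thesis using Suc.IH[OF True] nn[of "Suc i"] by (simp only: sum.atMost_Suc)
  next
    case False
    have mpos: "0 < real m" using m by simp
    have tpos: "2^i / real m < \<bar>t\<bar>" using False by simp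
    hence t0: "t \<noteq> 0" using mpos by (metis abs_zero divide_pos_pos not_less zero_less_numeral zero_less_power order.asym)
    have "(2^i / real m)^2 \<le> \<bar>t\<bar>^2" using tpos by (intro power_mono) (auto simp: mpos)
    moreover have "((2::real)^i)^2 = 4^i" by (simp add: power2_eq_square flip: power_mult_distrib)
    ultimately have "4^i / real m ^ 2 \<le> t^2" by (simp add: power_divide)
    hence le: "128 / t^2 \<le> 128 / (4^i / real m ^ 2)" using mpos t0 by (intro divide_left_mono) auto
    have "K m t \<le> 128 / t^2" using K_upper[OF t0 t] .
    also have "\<dots> \<le> 512 * real m ^ 2 / 4^(Suc i) * indicator {-(2^(Suc i) / real m)..2^(Suc i) / real m} t"
    proof -
      have "indicator {-(2^(Suc i) / real m)..2^(Suc i) / real m} t = (1::real)"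
        using Suc.prems by (auto simp: indicator_def abs_le_iff)
      thus ?thesis using le by (simp add: field_simps)
    qed
    also have "\<dots> \<le> (\<Sum>j\<le>Suc i. 512 * real m ^ 2 / 4^j * indicator {-(2^j / real m)..2^j / real m} t)"
      by (rule member_le_sum[OF _ nn]) auto
    finally show ?thesis .
  qed
qed




lemma K_cont: "continuous_on UNIV (K m)"
  unfolding K_def[abs_def] by (intro continuous_intros)

lemma K_bounds_F:
  fixes F :: "real measure"
  assumes sF: "sets F = sets borel" and fF: "finite_measure F" and supp: "emeasure F (- {-pi..pi}) = 0"
    and m: "m \<ge> 1"
  shows "real m ^ 2 / 2 * measure F {-(1/real m)..1/real m} \<le> integral\<^sup>L F (K m)"
    and "integral\<^sup>L F (K m) \<le> (\<Sum>j\<le>m+2. 512 * real m ^ 2 / 4^j * measure F {-(2^j/real m)..2^j/real m})"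
proof -
  interpret finite_measure F by (rule fF)
  have spF: "space F = UNIV" using sets_eq_imp_space_eq[OF sF] by simp
  have Kmeas: "K m \<in> borel_measurable F"
    unfolding measurable_cong_sets[OF sF refl] by (rule borel_measurable_continuous_onI[OF K_cont])
  have Kint: "integrable F (K m)"
  proof (rule integrable_const_bound[where B="real m ^ 2"])
    show "AE x in F. norm (K m x) \<le> real m ^ 2" using K_le_sq K_nonneg by simp
  qed (rule Kmeas)
  have intI: "integrable F (\<lambda>t. c * indicator {a..b} t)" for c a b :: real
  proof -
    have "integrable F (indicator {a..b} :: real \<Rightarrow> real)"
    proof -
      have "emeasure F {a..b} < top" using emeasure_finite[of "{a..b}"] top.not_eq_extremum by blast
      thus ?thesis unfolding integrable_indicator_iff by (auto simp: sF spF)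
    qed
    thus ?thesis by (rule integrable_mult_right)
  qed
  have intInd: "integral\<^sup>L F (\<lambda>t. c * indicator {a..b} t) = c * measure F {a..b}" for c a b :: real
    by (simp add: spF)
  show "real m ^ 2 / 2 * measure F {-(1/real m)..1/real m} \<le> integral\<^sup>L F (K m)"
  proof -
    have "real m ^ 2 / 2 * measure F {-(1/real m)..1/real m} = integral\<^sup>L F (\<lambda>t. real m ^ 2 / 2 * indicator {-(1/real m)..1/real m} t)"
      by (rule intInd[symmetric])
    also have "\<dots> \<le> integral\<^sup>L F (K m)"
    proof (rule integral_mono[OF intI Kint])
      fix t
      show "real m ^ 2 / 2 * indicator {-(1/real m)..1/real m} t \<le> K m t"
        using K_lower[OF m, of t] K_nonneg[of m t] by (auto simp: indicator_def abs_le_iff)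
    qed
    finally show ?thesis .
  qed
  show "integral\<^sup>L F (K m) \<le> (\<Sum>j\<le>m+2. 512 * real m ^ 2 / 4^j * measure F {-(2^j/real m)..2^j/real m})"
  proof -
    have AEpi: "AE t in F. t \<in> {-pi..pi}"
      by (rule AE_I[where N="- {-pi..pi}"]) (use supp sF in auto)
    have big: "pi \<le> 2^(m+2) / real m"
    proof -
      have "real m < 2^m" using less_exp[of m] by (metis of_nat_less_iff of_nat_numeral of_nat_power)
      moreover have "pi * real m \<le> 4 * real m" using pi_less_4 m by (intro mult_right_mono) auto
      ultimately have "pi * real m \<le> 4 * 2^m" by linarith
      thus ?thesis using m by (simp add: field_simps)
    qed
    have "integral\<^sup>L F (K m) \<le> integral\<^sup>L F (\<lambda>t. \<Sum>j\<le>m+2. 512 * real m ^ 2 / 4^j * indicator {-(2^j/real m)..2^j/real m} t)"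
    proof (rule integral_mono_AE[OF Kint])
      show "integrable F (\<lambda>t. \<Sum>j\<le>m+2. 512 * real m ^ 2 / 4^j * indicator {-(2^j/real m)..2^j/real m} t)"
        by (intro Bochner_Integration.integrable_sum intI)
      show "AE t in F. K m t \<le> (\<Sum>j\<le>m+2. 512 * real m ^ 2 / 4^j * indicator {-(2^j/real m)..2^j/real m} t)"
        using AEpi
      proof (eventually_elim)
        case (elim t)
        hence tp: "\<bar>t\<bar> \<le> pi" by auto
        show ?case by (rule K_dyadic[OF m tp]) (use tp big in linarith)
      qed
    qed
    also have "\<dots> = (\<Sum>j\<le>m+2. 512 * real m ^ 2 / 4^j * measure F {-(2^j/real m)..2^j/real m})"
      by (simp only: Bochner_Integration.integral_sum[OF intI] intInd)
    finally show ?thesis .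
  qed
qed




definition hL :: "(real \<Rightarrow> real) \<Rightarrow> real \<Rightarrow> real" where
  "hL L u = ln (L (exp u))"

lemma hL_lim:
  assumes sv: "slowly_varying L"
  shows "((\<lambda>u. hL L (u + a) - hL L u) \<longlongrightarrow> 0) at_top"
proof -
  have pos: "\<And>x. x > 0 \<Longrightarrow> L x > 0" and lim: "((\<lambda>x. L (exp a * x) / L x) \<longlongrightarrow> 1) at_top"
    using sv unfolding slowly_varying_def by auto
  have "((\<lambda>u. L (exp a * exp u) / L (exp u)) \<longlongrightarrow> 1) at_top"
    using filterlim_compose[OF lim exp_at_top] by (simp add: o_def)
  hence "((\<lambda>u. ln (L (exp a * exp u) / L (exp u))) \<longlongrightarrow> ln 1) at_top"
    by (rule tendsto_ln) simp
  moreover have "ln (L (exp a * exp u) / L (exp u)) = hL L (u + a) - hL L u" for u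
    unfolding hL_def using pos[of "exp u"] pos[of "exp a * exp u"]
    by (simp add: ln_div exp_add mult.commute)
  ultimately show ?thesis by simp
qed

lemma hL_uct:
  assumes sv: "slowly_varying L"
  shows "\<exists>A. \<forall>u\<ge>A. \<forall>a\<in>{0..1}. \<bar>hL L (u + a) - hL L u\<bar> \<le> 2"
proof (rule ccontr)
  define h where "h = hL L"
  have Lm[measurable]: "L \<in> borel_measurable borel" using sv unfolding slowly_varying_def by auto
  have hm[measurable]: "h \<in> borel_measurable borel" unfolding h_def hL_def[abs_def] by measurable
  assume "\<not> ?thesis"
  hence "\<forall>A. \<exists>u\<ge>A. \<exists>a\<in>{0..1}. \<bar>h (u + a) - h u\<bar> > 2"
    unfolding h_def by (simp add: not_le)
  hence "\<forall>k::nat. \<exists>p. fst p \<ge> real k \<and> snd p \<in> {0..1} \<and> \<bar>h (fst p + snd p) - h (fst p)\<bar> > 2"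
    by force
  then obtain p where p: "\<And>k::nat. fst (p k) \<ge> real k \<and> snd (p k) \<in> {0..1} \<and> \<bar>h (fst (p k) + snd (p k)) - h (fst (p k))\<bar> > 2"
    by metis
  define U where "U k = fst (p k)" for k
  define a where "a k = snd (p k)" for k
  have Uk: "U k \<ge> real k" and ak: "a k \<in> {0..1}" and big: "\<bar>h (U k + a k) - h (U k)\<bar> > 2" for k
    using p[of k] unfolding U_def a_def by auto
  have Ulim: "filterlim U at_top sequentially"
    by (rule filterlim_at_top_mono[OF filterlim_real_sequentially]) (use Uk in auto)
  have Vlim: "filterlim (\<lambda>k. U k + a k) at_top sequentially"
    by (rule filterlim_at_top_mono[OF filterlim_real_sequentially]) (use Uk ak in \<open>auto intro!: always_eventually simp: add_increasing2\<close>)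
  define bad where "bad W s = (if s \<in> {0..2} \<and> 1 \<le> \<bar>h (W + s) - h W\<bar> then 1 else (0::real))" for W s
  have bad_meas[measurable]: "bad W \<in> borel_measurable borel" for W
    unfolding bad_def by measurable
  have bad_nn: "0 \<le> bad W s" for W s by (simp add: bad_def)
  have bad01: "bad W s = 0 \<or> bad W s = 1" for W s by (simp add: bad_def)
  have ind_int: "integrable lborel (indicator {0..2::real} :: real \<Rightarrow> real)"
    by (simp add: integrable_indicator_iff)
  have bad_int: "integrable lborel (bad W)" for W
    by (rule Bochner_Integration.integrable_bound[OF ind_int]) (auto simp: bad_def indicator_def)
  have tends: "(\<lambda>k. integral\<^sup>L lborel (bad (W k))) \<longlonglongrightarrow> 0" if W: "filterlim W at_top sequentially" for W
  proof -
    have ae: "AE s in lborel. (\<lambda>k. bad (W k) s) \<longlonglongrightarrow> 0"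
    proof (intro AE_I2)
      fix s
      have "((\<lambda>k. h (W k + s) - h (W k)) \<longlongrightarrow> 0) sequentially"
        using filterlim_compose[OF hL_lim[OF sv, of s] W] unfolding h_def by (simp add: o_def)
      hence "eventually (\<lambda>k. dist (h (W k + s) - h (W k)) 0 < 1) sequentially"
        by (rule tendstoD) simp
      hence "eventually (\<lambda>k. bad (W k) s = 0) sequentially"
        by (rule eventually_mono) (auto simp: bad_def dist_real_def)
      thus "(\<lambda>k. bad (W k) s) \<longlonglongrightarrow> 0" by (rule tendsto_eventually)
    qed
    have bnd: "AE s in lborel. norm (bad (W k) s) \<le> indicator {0..2} s" for k
      by (intro AE_I2) (auto simp: bad_def indicator_def)
    have m2: "bad (W k) \<in> borel_measurable lborel" for k by simp
    note XX = Bochner_Integration.integral_dominated_convergence[of "\<lambda>s. 0::real" lborel "\<lambda>k. bad (W k)" "indicator {0..2}", OF _ m2 ind_int ae bnd]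
    have "(\<lambda>k. integral\<^sup>L lborel (bad (W k))) \<longlonglongrightarrow> integral\<^sup>L lborel (\<lambda>s. 0::real)"
      using XX by simp
    thus ?thesis by simp
  qed
  have key: "indicator {1..2} s \<le> bad (U k) s + bad (U k + a k) (-(a k) + 1 * s)" for k s
  proof (cases "s \<in> {1..2}")
    case True
    show ?thesis
    proof (rule ccontr)
      assume "\<not> ?thesis"
      hence both: "bad (U k) s = 0" "bad (U k + a k) (-(a k) + 1 * s) = 0"
        using True bad01[of "U k" s] bad01[of "U k + a k" "-(a k) + 1 * s"] by (auto simp: indicator_def)
      have s1: "s \<in> {0..2}" and s2: "-(a k) + 1 * s \<in> {0..2}" using True ak[of k] by auto
      have "\<bar>h (U k + s) - h (U k)\<bar> < 1" using both(1) s1 by (auto simp: bad_def split: if_splits)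
      moreover have "\<bar>h (U k + s) - h (U k + a k)\<bar> < 1"
      proof -
        have e: "U k + a k + (-(a k) + 1 * s) = U k + s" by simp
        show ?thesis using both(2) s2 unfolding bad_def e by (auto split: if_splits)
      qed
      ultimately show False using big[of k] by linarith
    qed
  qed (auto simp: indicator_def bad_nn add_nonneg_nonneg)
  have ge1: "1 \<le> integral\<^sup>L lborel (bad (U k)) + integral\<^sup>L lborel (bad (U k + a k))" for k
  proof -
    have eq: "integral\<^sup>L lborel (bad (U k + a k)) = integral\<^sup>L lborel (\<lambda>s. bad (U k + a k) (s - a k))"
      using lborel_integral_real_affine[of 1 "bad (U k + a k)" "-(a k)"] by simp
    have int2: "integrable lborel (\<lambda>s. bad (U k + a k) (s - a k))"
      using lborel_integrable_real_affine[OF bad_int[of "U k + a k"], of 1 "-(a k)"] by simp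
    have key2: "indicator {1..2} s \<le> bad (U k) s + bad (U k + a k) (s - a k)" for s
      using key[of s k] by simp
    have "1 = integral\<^sup>L lborel (indicator {1..2::real} :: real \<Rightarrow> real)" by simp
    also have "\<dots> \<le> integral\<^sup>L lborel (\<lambda>s. bad (U k) s + bad (U k + a k) (s - a k))"
    proof (rule integral_mono)
      show "integrable lborel (indicator {1..2::real} :: real \<Rightarrow> real)" by (simp add: integrable_indicator_iff)
      show "integrable lborel (\<lambda>s. bad (U k) s + bad (U k + a k) (s - a k))"
        by (rule Bochner_Integration.integrable_add[OF bad_int int2])
    qed (rule key2)
    also have "\<dots> = integral\<^sup>L lborel (bad (U k)) + integral\<^sup>L lborel (bad (U k + a k))"
      using eq by (subst Bochner_Integration.integral_add[OF bad_int int2]) simp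
    finally show ?thesis .
  qed
  have "(\<lambda>k. integral\<^sup>L lborel (bad (U k)) + integral\<^sup>L lborel (bad (U k + a k))) \<longlonglongrightarrow> 0 + 0"
    by (intro tendsto_add tends Ulim Vlim)
  hence "eventually (\<lambda>k. dist (integral\<^sup>L lborel (bad (U k)) + integral\<^sup>L lborel (bad (U k + a k))) 0 < 1) sequentially"
    by (intro tendstoD) auto
  then obtain k where "dist (integral\<^sup>L lborel (bad (U k)) + integral\<^sup>L lborel (bad (U k + a k))) 0 < 1"
    using eventually_sequentially by auto
  thus False using ge1[of k] by (auto simp: dist_real_def)
qed




lemma sv_pos: "slowly_varying L \<Longrightarrow> x > 0 \<Longrightarrow> L x > 0"
  unfolding slowly_varying_def by auto

lemma sv_ratio:
  assumes sv: "slowly_varying L"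
  shows "\<exists>A>0. \<forall>y\<ge>A. \<forall>l. 1 \<le> l \<and> l \<le> 2 \<longrightarrow> L y \<le> exp 2 * L (l * y)"
proof -
  obtain A0 where A0: "\<And>u a. u \<ge> A0 \<Longrightarrow> a \<in> {0..1} \<Longrightarrow> \<bar>hL L (u + a) - hL L u\<bar> \<le> 2"
    using hL_uct[OF sv] by blast
  define A where "A = max 1 (exp A0)"
  have "A > 0" unfolding A_def by simp
  moreover have "L y \<le> exp 2 * L (l * y)" if y: "y \<ge> A" and l: "1 \<le> l" "l \<le> 2" for y l
  proof -
    have ypos: "y > 0" using y unfolding A_def by simp
    have "ln y \<ge> A0" using y unfolding A_def by (simp add: ln_ge_iff)
    moreover have "ln l \<in> {0..1}"
    proof -
      have a: "ln l \<le> ln 2" using l by simp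
      have b: "0 \<le> ln l" using l by simp
      from a b ln_2_less_1 have "0 \<le> ln l \<and> ln l \<le> 1" by linarith
      thus ?thesis by simp
    qed
    ultimately have b: "\<bar>hL L (ln y + ln l) - hL L (ln y)\<bar> \<le> 2" by (rule A0)
    have e1: "hL L (ln y + ln l) = ln (L (l * y))" unfolding hL_def using ypos l
      by (simp add: exp_add mult.commute)
    have e2: "hL L (ln y) = ln (L y)" unfolding hL_def using ypos by simp
    have "ln (L y) \<le> 2 + ln (L (l * y))" using b unfolding e1 e2 by linarith
    hence "exp (ln (L y)) \<le> exp (2 + ln (L (l * y)))" by simp
    thus ?thesis using sv_pos[OF sv, of y] sv_pos[OF sv, of "l * y"] ypos l by (simp add: exp_add)
  qed
  ultimately show ?thesis by blast
qed

lemma sv_iter: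
  assumes sv: "slowly_varying L" and A: "A > 0"
    and r: "\<forall>y\<ge>A. \<forall>l. 1 \<le> l \<and> l \<le> 2 \<longrightarrow> L y \<le> exp 2 * L (l * y)"
  shows "y \<ge> A \<Longrightarrow> 1 \<le> \<mu> \<Longrightarrow> \<mu> \<le> 2^j \<Longrightarrow> L y \<le> exp 2 ^ j * L (\<mu> * y)"
proof (induction j arbitrary: y \<mu>)
  case 0 then show ?case by simp
next
  case (Suc j)
  have e1: "1 \<le> exp (2::real)" by simp
  have ypos: "y > 0" using Suc.prems A by linarith
  show ?case
  proof (cases "\<mu> \<le> 2")
    case True
    have "L y \<le> exp 2 * L (\<mu> * y)" using r Suc.prems True by blast
    also have "\<dots> \<le> exp 2 ^ Suc j * L (\<mu> * y)"
    proof (rule mult_right_mono)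
      show "exp 2 \<le> exp (2::real) ^ Suc j" using e1 by (simp add: one_le_power)
      show "0 \<le> L (\<mu> * y)" using sv_pos[OF sv, of "\<mu> * y"] ypos Suc.prems by simp
    qed
    finally show ?thesis .
  next
    case False
    have "L y \<le> exp 2 * L (2 * y)" using r Suc.prems by auto
    also have "L (2 * y) \<le> exp 2 ^ j * L ((\<mu> / 2) * (2 * y))"
      using Suc.IH[of "2 * y" "\<mu> / 2"] Suc.prems False ypos by auto
    finally show ?thesis by (simp add: mult_ac)
  qed
qed

lemma sv_dyadic:
  assumes sv: "slowly_varying L" and d: "\<delta> > 0"
  shows "\<exists>A>0. \<forall>z\<ge>A. L z \<le> 2 powr \<delta> * L (2 * z) \<and> L (2 * z) \<le> 2 powr \<delta> * L z"
proof -
  have lim: "((\<lambda>x. L (2 * x) / L x) \<longlongrightarrow> 1) at_top" using sv unfolding slowly_varying_def by auto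
  have "2 powr (-\<delta>) < (1::real)" using d by (simp add: powr_less_one)
  hence ev1: "eventually (\<lambda>x. 2 powr (-\<delta>) < L (2 * x) / L x) at_top" by (rule order_tendstoD(1)[OF lim])
  have "1 < 2 powr \<delta>" using d by simp
  hence ev2: "eventually (\<lambda>x. L (2 * x) / L x < 2 powr \<delta>) at_top" by (rule order_tendstoD(2)[OF lim])
  obtain A where A: "\<And>x. x \<ge> A \<Longrightarrow> 2 powr (-\<delta>) < L (2 * x) / L x \<and> L (2 * x) / L x < 2 powr \<delta>"
    using eventually_conj[OF ev1 ev2] unfolding eventually_at_top_linorder by blast
  define A' where "A' = max A 1"
  have "A' > 0" unfolding A'_def by simp
  moreover have "L z \<le> 2 powr \<delta> * L (2 * z) \<and> L (2 * z) \<le> 2 powr \<delta> * L z" if z: "z \<ge> A'" for z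
  proof -
    have zp: "z > 0" using z unfolding A'_def by simp
    have Lz: "L z > 0" using sv_pos[OF sv zp] .
    have r: "2 powr (-\<delta>) < L (2 * z) / L z" "L (2 * z) / L z < 2 powr \<delta>" using A[of z] z unfolding A'_def by auto
    from r(2) Lz have b2: "L (2 * z) < 2 powr \<delta> * L z" by (simp add: divide_less_eq)
    from r(1) Lz have "2 powr (-\<delta>) * L z < L (2 * z)" by (simp add: less_divide_eq)
    hence "2 powr \<delta> * (2 powr (-\<delta>) * L z) < 2 powr \<delta> * L (2 * z)" by simp
    hence b1: "L z < 2 powr \<delta> * L (2 * z)" by (simp add: powr_minus field_simps)
    show ?thesis using b1 b2 by simp
  qed
  ultimately show ?thesis by blast
qed

lemma sv_potter_up:
  assumes sv: "slowly_varying L" and d: "\<delta> > 0"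
  shows "\<exists>A>0. \<forall>i y. A \<le> y / 2^i \<longrightarrow> L (y / 2^i) \<le> 2 powr (\<delta> * real i) * L y"
proof -
  obtain A where A: "A > 0" and dy: "\<And>z. z \<ge> A \<Longrightarrow> L z \<le> 2 powr \<delta> * L (2 * z)"
    using sv_dyadic[OF sv d] by blast
  have "A \<le> y / 2^i \<longrightarrow> L (y / 2^i) \<le> 2 powr (\<delta> * real i) * L y" for i y
  proof (induction i)
    case 0 then show ?case by simp
  next
    case (Suc i)
    show ?case
    proof
      assume h: "A \<le> y / 2 ^ Suc i"
      have yp: "0 < y / 2 ^ Suc i" using h A by linarith
      have e2: "y / 2^i = 2 * (y / 2 ^ Suc i)" by simp
      have h2: "A \<le> y / 2^i" unfolding e2 using h yp by linarith
      have "L (y / 2 ^ Suc i) \<le> 2 powr \<delta> * L (2 * (y / 2 ^ Suc i))" using dy[OF h] .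
      also have "2 * (y / 2 ^ Suc i) = y / 2^i" by simp
      also have "2 powr \<delta> * L (y / 2^i) \<le> 2 powr \<delta> * (2 powr (\<delta> * real i) * L y)"
        using Suc.IH h2 by (intro mult_left_mono) auto
      also have "\<dots> = 2 powr (\<delta> * real (Suc i)) * L y"
        by (simp add: powr_add[symmetric] algebra_simps)
      finally show "L (y / 2 ^ Suc i) \<le> 2 powr (\<delta> * real (Suc i)) * L y" .
    qed
  qed
  thus ?thesis using A by blast
qed




lemma sv_lower:
  assumes sv: "slowly_varying L" and d: "\<delta> > 0"
  shows "\<exists>c>0. \<exists>A>0. \<forall>y\<ge>A. c * y powr (-\<delta>) \<le> L y"
proof -
  obtain A1 where A1: "A1 > 0" and r: "\<forall>y\<ge>A1. \<forall>l. 1 \<le> l \<and> l \<le> 2 \<longrightarrow> L y \<le> exp 2 * L (l * y)"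
    using sv_ratio[OF sv] by blast
  obtain A2 where A2: "A2 > 0" and dy: "\<And>z. z \<ge> A2 \<Longrightarrow> L z \<le> 2 powr \<delta> * L (2 * z)"
    using sv_dyadic[OF sv d] by blast
  define A where "A = max A1 A2"
  have Apos: "A > 0" using A1 unfolding A_def by simp
  define c0 where "c0 = L A / exp 2 * 2 powr (-\<delta>)"
  have LA: "L A > 0" using sv_pos[OF sv Apos] .
  have c0pos: "c0 > 0" unfolding c0_def using LA by simp
  have Q: "\<forall>y. A \<le> y \<and> y \<le> 2^(Suc i) * A \<longrightarrow> c0 * (y / A) powr (-\<delta>) \<le> L y" for i
  proof (induction i)
    case 0
    show ?case
    proof (intro allI impI)
      fix y assume y: "A \<le> y \<and> y \<le> 2^(Suc 0) * A"
      have l: "1 \<le> y / A" "y / A \<le> 2" using y Apos by (auto simp: field_simps)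
      have AA1: "A \<ge> A1" unfolding A_def by simp
      have "L A \<le> exp 2 * L ((y / A) * A)" using r AA1 l by blast
      hence "L A \<le> exp 2 * L y" using Apos by simp
      hence "L A / exp 2 \<le> L y" by (simp add: divide_le_eq mult.commute)
      moreover have "(y / A) powr (-\<delta>) \<le> 1" using powr_mono[of "-\<delta>" 0 "y/A"] l d Apos y by (simp split: if_splits)
      moreover have "2 powr (-\<delta>) \<le> (1::real)" using powr_mono[of "-\<delta>" 0 "2::real"] d by simp
      ultimately have "c0 * (y / A) powr (-\<delta>) \<le> L A / exp 2 * 1 * 1"
        unfolding c0_def using LA by (intro mult_mono) auto
      thus "c0 * (y / A) powr (-\<delta>) \<le> L y" using \<open>L A / exp 2 \<le> L y\<close> by simp
    qed
  next
    case (Suc i)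
    show ?case
    proof (intro allI impI)
      fix y assume y: "A \<le> y \<and> y \<le> 2^(Suc (Suc i)) * A"
      show "c0 * (y / A) powr (-\<delta>) \<le> L y"
      proof (cases "y \<le> 2^(Suc i) * A")
        case True thus ?thesis using Suc.IH y by blast
      next
        case False
        define z where "z = y / 2"
        have "2 * A \<le> 2^(Suc i) * A" using Apos by (intro mult_right_mono) (auto simp: self_le_power)
        hence zA: "A \<le> z" using False unfolding z_def by simp
        have zB: "z \<le> 2^(Suc i) * A" using y unfolding z_def by simp
        have IHz: "c0 * (z / A) powr (-\<delta>) \<le> L z" using Suc.IH zA zB by blast
        have "z \<ge> A2" using zA unfolding A_def by simp
        hence "L z \<le> 2 powr \<delta> * L (2 * z)" by (rule dy)
        hence Lz: "2 powr (-\<delta>) * L z \<le> L y" unfolding z_def by (simp add: powr_minus field_simps)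
        have "(y / A) powr (-\<delta>) = 2 powr (-\<delta>) * (z / A) powr (-\<delta>)"
          unfolding z_def using Apos y by (simp add: powr_mult[symmetric])
        hence "c0 * (y / A) powr (-\<delta>) = 2 powr (-\<delta>) * (c0 * (z / A) powr (-\<delta>))" by simp
        also have "\<dots> \<le> 2 powr (-\<delta>) * L z" using IHz by (intro mult_left_mono) auto
        finally show ?thesis using Lz by linarith
      qed
    qed
  qed
  have "c0 * A powr \<delta> * y powr (-\<delta>) \<le> L y" if y: "y \<ge> A" for y
  proof -
    obtain n where n: "y / A < 2^n" using real_arch_pow[of 2 "y / A"] by auto
    have "y < 2^n * A" using n Apos by (simp add: divide_less_eq)
    moreover have "(2::real)^n * A \<le> 2^(Suc n) * A" using Apos by simp
    ultimately have "y \<le> 2^(Suc n) * A" by linarith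
    hence "c0 * (y / A) powr (-\<delta>) \<le> L y" using Q[of n] y by blast
    moreover have "(y / A) powr (-\<delta>) = A powr \<delta> * y powr (-\<delta>)"
      using Apos y by (simp add: powr_divide powr_minus field_simps)
    ultimately show ?thesis by (simp add: mult_ac)
  qed
  moreover have "c0 * A powr \<delta> > 0" using c0pos Apos by simp
  ultimately show ?thesis using Apos by blast
qed




lemma ln4: "ln (4::real) = 2 * ln 2"
  using ln_realpow[of 2 2] by simp

lemma id1:
  fixes M \<delta> :: real
  assumes M: "M > 0"
  shows "M^2 / 4^j * (2^j / M) powr (2 - 2*\<delta>) * 2 powr (\<delta> * real j) = M powr (2*\<delta>) * (2 powr (-\<delta>))^j"
proof (rule ln_inj_iff[THEN iffD1])
  show "0 < M^2 / 4^j * (2^j / M) powr (2 - 2*\<delta>) * 2 powr (\<delta> * real j)" using M by simp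
  show "0 < M powr (2*\<delta>) * (2 powr (-\<delta>))^j" using M by simp
  show "ln (M^2 / 4^j * (2^j / M) powr (2 - 2*\<delta>) * 2 powr (\<delta> * real j)) = ln (M powr (2*\<delta>) * (2 powr (-\<delta>))^j)"
    using M by (simp add: ln_mult ln_div ln_powr ln_realpow ln4 algebra_simps)
qed

lemma id2:
  fixes M :: real
  assumes M: "M > 0"
  shows "M^2 / 4^j = (2^j / M) powr (-2)"
proof (rule ln_inj_iff[THEN iffD1])
  show "0 < M^2 / 4^j" using M by simp
  show "0 < (2^j / M) powr (-2)" using M by simp
  show "ln (M^2 / 4^j) = ln ((2^j / M) powr (-2))"
    using M by (simp add: ln_mult ln_div ln_powr ln_realpow ln4 algebra_simps)
qed

lemma id3:
  fixes M \<delta> :: real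
  assumes M: "M > 0"
  shows "(2^j / M) powr (-\<delta>) = M powr \<delta> * (2 powr (-\<delta>))^j"
proof (rule ln_inj_iff[THEN iffD1])
  show "0 < (2^j / M) powr (-\<delta>)" using M by simp
  show "0 < M powr \<delta> * (2 powr (-\<delta>))^j" using M by simp
  show "ln ((2^j / M) powr (-\<delta>)) = ln (M powr \<delta> * (2 powr (-\<delta>))^j)"
    using M by (simp add: ln_mult ln_div ln_powr ln_realpow algebra_simps)
qed




lemma imp12:
  fixes V :: "nat \<Rightarrow> real" and G :: "real \<Rightarrow> real" and n :: "nat \<Rightarrow> nat" and L :: "real \<Rightarrow> real"
  assumes sv: "slowly_varying L" and g0: "0 < \<gamma>" and g2: "\<gamma> < 2"
    and Vlow: "\<And>m. m \<ge> 1 \<Longrightarrow> real m ^ 2 / 2 * G (1 / real m) \<le> V m"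
    and Gmono: "\<And>x y. 0 < x \<Longrightarrow> x \<le> y \<Longrightarrow> G x \<le> G y"
    and npos: "\<And>k. n k > 0" and nmono: "mono n" and nlim: "filterlim n at_top sequentially"
    and kap: "\<exists>\<kappa>. \<forall>k. real (n (Suc k)) / real (n k) \<le> \<kappa>"
    and h1: "\<exists>C>0. eventually (\<lambda>k. V (n k) \<le> C * (real (n k) powr \<gamma> * L (real (n k)))) sequentially"
  shows "\<exists>C>0. \<exists>x0. 0 < x0 \<and> x0 \<le> pi \<and> (\<forall>x. 0 < x \<and> x \<le> x0 \<longrightarrow> G x \<le> C * (x powr (2 - \<gamma>) * L (1 / x)))"
proof -
  obtain C1 k0 where C1: "C1 > 0" and hk: "\<And>k. k \<ge> k0 \<Longrightarrow> V (n k) \<le> C1 * (real (n k) powr \<gamma> * L (real (n k)))"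
    using h1 unfolding eventually_sequentially by blast
  have Gk: "G (1 / real (n k)) \<le> 2 * C1 * (real (n k) powr (\<gamma> - 2) * L (real (n k)))" if k: "k \<ge> k0" for k
  proof -
    have np: "real (n k) > 0" using npos[of k] by simp
    have "real (n k) ^ 2 / 2 * G (1 / real (n k)) \<le> C1 * (real (n k) powr \<gamma> * L (real (n k)))"
      using Vlow[of "n k"] hk[OF k] npos[of k] by (simp add: Suc_le_eq)
    hence "G (1 / real (n k)) \<le> 2 * C1 * (real (n k) powr \<gamma> * L (real (n k))) / real (n k) ^ 2"
      using np by (simp add: field_simps)
    also have "real (n k) powr \<gamma> / real (n k) ^ 2 = real (n k) powr (\<gamma> - 2)"
      using np by (simp add: powr_diff powr_realpow[of _ 2, simplified])
    hence "2 * C1 * (real (n k) powr \<gamma> * L (real (n k))) / real (n k) ^ 2 = 2 * C1 * (real (n k) powr (\<gamma> - 2) * L (real (n k)))"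
      by (metis (no_types, lifting) times_divide_eq_right mult.commute mult.left_commute)
    finally show ?thesis .
  qed
  obtain \<kappa> where kk: "\<And>k. real (n (Suc k)) / real (n k) \<le> \<kappa>" using kap by blast
  have k1: "1 \<le> \<kappa>"
  proof -
    have "n 0 \<le> n (Suc 0)" using nmono by (simp add: mono_def)
    hence "1 \<le> real (n (Suc 0)) / real (n 0)" using npos[of 0] by simp
    thus ?thesis using kk[of 0] by linarith
  qed
  obtain A where Apos: "A > 0" and r: "\<forall>y\<ge>A. \<forall>l. 1 \<le> l \<and> l \<le> 2 \<longrightarrow> L y \<le> exp 2 * L (l * y)"
    using sv_ratio[OF sv] by blast
  obtain j where j: "\<kappa> < 2^j" using real_arch_pow[of 2 \<kappa>] by auto
  define x0 where "x0 = min pi (min (1 / real (n k0)) (1 / (\<kappa> * A)))"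
  have x0pos: "0 < x0" unfolding x0_def using npos[of k0] k1 Apos by auto
  define C where "C = 2 * C1 * \<kappa> powr (2 - \<gamma>) * exp 2 ^ j"
  have Cpos: "C > 0" unfolding C_def using C1 k1 by simp
  have "G x \<le> C * (x powr (2 - \<gamma>) * L (1 / x))" if x: "0 < x" "x \<le> x0" for x
  proof -
    define S where "S = {k. real (n k) \<le> 1 / x}"
    obtain N where N: "\<And>k. k \<ge> N \<Longrightarrow> nat (ceiling (1/x)) + 1 \<le> n k"
      using nlim unfolding filterlim_at_top eventually_sequentially by blast
    have Sfin: "finite S"
    proof (rule finite_subset[of S "{..<N}"])
      show "S \<subseteq> {..<N}"
      proof
        fix k assume "k \<in> S"
        hence kS: "real (n k) \<le> 1 / x" unfolding S_def by simp
        show "k \<in> {..<N}"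
        proof (rule ccontr)
          assume "k \<notin> {..<N}"
          hence "nat (ceiling (1/x)) + 1 \<le> n k" using N by simp
          hence "real (nat (ceiling (1/x))) + 1 \<le> real (n k)" by linarith
          moreover have "1/x \<le> real (nat (ceiling (1/x)))" by linarith
          ultimately show False using kS by linarith
        qed
      qed
    qed simp
    have xk0: "x \<le> 1 / real (n k0)" using x unfolding x0_def by simp
    have k0S: "k0 \<in> S" unfolding S_def using xk0 x npos[of k0] by (simp add: field_simps)
    define k where "k = Max S"
    have kS: "k \<in> S" unfolding k_def using Sfin k0S by (intro Max_in) auto
    have kk0: "k \<ge> k0" unfolding k_def using Sfin k0S by simp
    have "Suc k \<notin> S" using Sfin kS unfolding k_def by (metis Max_ge Suc_n_not_le_n)
    hence big: "1 / x < real (n (Suc k))" unfolding S_def by simp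
    have nkp: "real (n k) > 0" using npos[of k] by simp
    have nk: "real (n k) \<le> 1 / x" using kS unfolding S_def by simp
    have "real (n (Suc k)) \<le> \<kappa> * real (n k)" using kk[of k] nkp by (simp add: divide_le_eq)
    hence lt: "1 / x < \<kappa> * real (n k)" using big by linarith
    have xA: "x \<le> 1 / (\<kappa> * A)" using x unfolding x0_def by simp
    have kpos: "\<kappa> > 0" using k1 by simp
    have nkA: "A \<le> real (n k)"
    proof -
      have "\<kappa> * A * x \<le> 1" using xA kpos Apos by (simp add: field_simps)
      hence "A \<le> 1 / (\<kappa> * x)" using kpos x by (simp add: field_simps)
      also have "\<dots> < real (n k)" using lt kpos x by (simp add: field_simps)
      finally show ?thesis by simp
    qed
    define \<mu> where "\<mu> = (1 / x) / real (n k)"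
    have mu1: "1 \<le> \<mu>" unfolding \<mu>_def using nk nkp by (simp only: le_divide_eq_1_pos)
    have "\<mu> < \<kappa>" unfolding \<mu>_def pos_divide_less_eq[OF nkp] using lt by (metis mult.commute)
    hence mu2: "\<mu> \<le> 2^j" using j by linarith
    have "L (real (n k)) \<le> exp 2 ^ j * L (\<mu> * real (n k))"
      by (rule sv_iter[OF sv Apos r nkA mu1 mu2])
    also have "\<mu> * real (n k) = 1 / x" unfolding \<mu>_def using nkp by simp
    finally have Lb: "L (real (n k)) \<le> exp 2 ^ j * L (1 / x)" .
    have "real (n k) powr (\<gamma> - 2) \<le> (1 / (\<kappa> * x)) powr (\<gamma> - 2)"
    proof (rule powr_mono2')
      show "\<gamma> - 2 \<le> 0" using g2 by simp
      show "0 < 1 / (\<kappa> * x)" using kpos x by simp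
      show "1 / (\<kappa> * x) \<le> real (n k)" using lt kpos x by (simp add: field_simps)
    qed
    also have "(1 / (\<kappa> * x)) powr (\<gamma> - 2) = \<kappa> powr (2 - \<gamma>) * x powr (2 - \<gamma>)"
      using kpos x by (simp add: powr_divide powr_mult powr_minus_divide[symmetric] flip: powr_mult)
    finally have Pb: "real (n k) powr (\<gamma> - 2) \<le> \<kappa> powr (2 - \<gamma>) * x powr (2 - \<gamma>)" .
    have "G x \<le> G (1 / real (n k))" using x nk nkp by (intro Gmono) (auto simp: field_simps)
    also have "\<dots> \<le> 2 * C1 * (real (n k) powr (\<gamma> - 2) * L (real (n k)))" using Gk[OF kk0] .
    also have "\<dots> \<le> 2 * C1 * ((\<kappa> powr (2 - \<gamma>) * x powr (2 - \<gamma>)) * (exp 2 ^ j * L (1 / x)))"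
      using Pb Lb C1 sv_pos[OF sv nkp] by (intro mult_left_mono mult_mono) auto
    also have "\<dots> = C * (x powr (2 - \<gamma>) * L (1 / x))" unfolding C_def by (simp add: mult_ac)
    finally show ?thesis .
  qed
  moreover have "x0 \<le> pi" unfolding x0_def by simp
  ultimately show ?thesis using Cpos x0pos by blast
qed




lemma imp23:
  fixes V :: "nat \<Rightarrow> real" and G :: "real \<Rightarrow> real" and L :: "real \<Rightarrow> real"
  assumes sv: "slowly_varying L" and g0: "0 < \<gamma>" and g2: "\<gamma> < 2"
    and Vup: "\<And>m. m \<ge> 1 \<Longrightarrow> V m \<le> (\<Sum>j\<le>m+2. 512 * real m ^ 2 / 4^j * G (2^j / real m))"
    and Gnn: "\<And>x. 0 \<le> G x" and Gt: "\<And>x. G x \<le> Gt"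
    and h2: "\<exists>C>0. \<exists>x0. 0 < x0 \<and> x0 \<le> pi \<and> (\<forall>x. 0 < x \<and> x \<le> x0 \<longrightarrow> G x \<le> C * (x powr (2 - \<gamma>) * L (1 / x)))"
  shows "\<exists>C>0. eventually (\<lambda>m. V m \<le> C * (real m powr \<gamma> * L (real m))) sequentially"
proof -
  obtain C2 x0 where C2: "C2 > 0" and x0: "0 < x0" and Gb: "\<And>x. 0 < x \<Longrightarrow> x \<le> x0 \<Longrightarrow> G x \<le> C2 * (x powr (2 - \<gamma>) * L (1 / x))"
    using h2 by blast
  have ar: "\<And>a b p cc qq::real. a * (b * (p / cc * qq)) = (a * b / cc) * p * qq" by (simp add: algebra_simps)
  define \<delta> where "\<delta> = \<gamma> / 2"
  have dpos: "\<delta> > 0" and gd: "\<gamma> = 2 * \<delta>" and d1: "\<delta> < 1" using g0 g2 unfolding \<delta>_def by auto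
  obtain AP where AP: "AP > 0" and pot: "\<And>i y. AP \<le> y / 2^i \<Longrightarrow> L (y / 2^i) \<le> 2 powr (\<delta> * real i) * L y"
    using sv_potter_up[OF sv dpos] by blast
  obtain c AL where c: "c > 0" and AL: "AL > 0" and low: "\<And>y. y \<ge> AL \<Longrightarrow> c * y powr (-\<delta>) \<le> L y"
    using sv_lower[OF sv dpos] by blast
  define x1 where "x1 = min x0 (1 / AP)"
  have x1pos: "x1 > 0" unfolding x1_def using x0 AP by simp
  define q :: real where "q = 2 powr (-\<delta>)"
  have q0: "0 < q" and q1: "q < 1" unfolding q_def using dpos by (auto simp: powr_less_one)
  have Gt0: "0 \<le> Gt" using Gnn[of 0] Gt[of 0] by linarith
  define D where "D = 512 * C2 + 512 * Gt * x1 powr (\<delta> - 2) / c"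
  have D0: "0 \<le> D" unfolding D_def using C2 Gt0 c by simp
  define E where "E = 1 / (1 - q)"
  define C where "C = D * E + 1"
  have E0: "0 < E" unfolding E_def using q1 by simp
  have Cpos: "C > 0" unfolding C_def using D0 E0 by (simp add: add_nonneg_pos)
  have ev: "eventually (\<lambda>m. real m \<ge> max 1 AL) sequentially"
  proof -
    obtain N :: nat where N: "max 1 AL \<le> real N" using real_arch_simple by blast
    show ?thesis unfolding eventually_sequentially
      by (rule exI[of _ N]) (use N in \<open>auto intro: order_trans\<close>)
  qed
  have hm: "V m \<le> C * (real m powr \<gamma> * L (real m))" if m: "real m \<ge> max 1 AL" for m
  proof -
    define M where "M = real m"
    have M1: "M \<ge> 1" and MAL: "M \<ge> AL" using m unfolding M_def by auto
    have Mpos: "M > 0" using M1 by simp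
    have m1: "m \<ge> 1" using M1 unfolding M_def by simp
    have LM: "L M > 0" using sv_pos[OF sv Mpos] .
    define P where "P = M powr \<gamma> * L M"
    have P0: "P > 0" unfolding P_def using Mpos LM by simp
    have tb: "512 * M ^ 2 / 4^j * G (2^j / M) \<le> D * P * q^j" for j
    proof (cases "2^j / M \<le> x1")
      case True
      define \<rho> where "\<rho> = 2^j / M"
      have rpos: "\<rho> > 0" unfolding \<rho>_def using Mpos by simp
      have rx0: "\<rho> \<le> x0" using True unfolding \<rho>_def x1_def by simp
      have "\<rho> \<le> 1 / AP" using True unfolding \<rho>_def x1_def by simp
      hence "AP \<le> 1 / \<rho>" using rpos AP by (simp add: field_simps)
      hence APM: "AP \<le> M / 2^j" unfolding \<rho>_def by simp
      have e1: "1 / \<rho> = M / 2^j" unfolding \<rho>_def by simp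
      have "G \<rho> \<le> C2 * (\<rho> powr (2 - \<gamma>) * L (M / 2^j))" using Gb[OF rpos rx0] unfolding e1 .
      also have "\<dots> \<le> C2 * (\<rho> powr (2 - \<gamma>) * (2 powr (\<delta> * real j) * L M))"
        using pot[OF APM] C2 by (intro mult_left_mono) auto
      finally have Gr: "G \<rho> \<le> C2 * (\<rho> powr (2 - \<gamma>) * (2 powr (\<delta> * real j) * L M))" .
      have "512 * M ^ 2 / 4^j * G (2^j / M) \<le> 512 * M ^ 2 / 4^j * (C2 * (\<rho> powr (2 - \<gamma>) * (2 powr (\<delta> * real j) * L M)))"
        using Gr unfolding \<rho>_def by (intro mult_left_mono) auto
      also have "\<dots> = 512 * C2 * L M * (M^2 / 4^j * (2^j / M) powr (2 - 2*\<delta>) * 2 powr (\<delta> * real j))"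
        unfolding \<rho>_def gd by (simp add: mult_ac)
      also have "\<dots> = 512 * C2 * P * q^j"
        unfolding id1[OF Mpos] P_def q_def gd by (simp add: mult_ac)
      also have "\<dots> \<le> D * P * q^j"
        using P0 q0 Gt0 c x1pos unfolding D_def by (intro mult_right_mono) auto
      finally show ?thesis .
    next
      case False
      define \<rho> where "\<rho> = 2^j / M"
      have rpos: "\<rho> > 0" unfolding \<rho>_def using Mpos by simp
      have rx1: "x1 \<le> \<rho>" using False unfolding \<rho>_def by simp
      have "\<rho> powr (-2) = \<rho> powr (\<delta> - 2) * \<rho> powr (-\<delta>)"
        by (simp add: powr_add[symmetric])
      also have "\<dots> \<le> x1 powr (\<delta> - 2) * \<rho> powr (-\<delta>)"
        by (intro mult_right_mono powr_mono2') (use d1 x1pos rx1 in auto)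
      also have "\<rho> powr (-\<delta>) = M powr \<delta> * q^j" unfolding \<rho>_def q_def by (rule id3[OF Mpos])
      finally have r2: "\<rho> powr (-2) \<le> x1 powr (\<delta> - 2) * (M powr \<delta> * q^j)" .
      have "c * M powr (-\<delta>) \<le> L M" using low[OF MAL] .
      hence "c * M powr (-\<delta>) * M powr \<gamma> \<le> L M * M powr \<gamma>" by (intro mult_right_mono) auto
      moreover have "M powr (-\<delta>) * M powr \<gamma> = M powr \<delta>" unfolding gd by (simp add: powr_add[symmetric])
      ultimately have "c * M powr \<delta> \<le> P" unfolding P_def by (simp add: mult_ac)
      hence Md: "M powr \<delta> \<le> P / c" using c by (simp add: field_simps)
      have "512 * M ^ 2 / 4^j * G (2^j / M) \<le> 512 * M ^ 2 / 4^j * Gt"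
        using Gt by (intro mult_left_mono) auto
      also have "\<dots> = 512 * Gt * \<rho> powr (-2)" unfolding \<rho>_def id2[OF Mpos, symmetric] by simp
      also have "\<dots> \<le> 512 * Gt * (x1 powr (\<delta> - 2) * (M powr \<delta> * q^j))"
        using r2 Gt0 by (intro mult_left_mono) auto
      also have "\<dots> \<le> 512 * Gt * (x1 powr (\<delta> - 2) * (P / c * q^j))"
        using Md Gt0 q0 by (intro mult_left_mono mult_right_mono) auto
      also have "\<dots> = (512 * Gt * x1 powr (\<delta> - 2) / c) * P * q^j" by (rule ar)
      also have "\<dots> \<le> D * P * q^j"
        using P0 q0 C2 unfolding D_def by (intro mult_right_mono) auto
      finally show ?thesis .
    qed
    have geo: "(\<Sum>j\<le>m+2. q^j) \<le> E"
    proof -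
      have "(\<Sum>j\<le>m+2. q^j) = (\<Sum>j<Suc (m+2). q^j)" by (simp add: lessThan_Suc_atMost)
      also have "\<dots> = (1 - q^Suc (m+2)) / (1 - q)" using q1 by (subst sum_gp_strict) simp
      also have "\<dots> \<le> 1 / (1 - q)" using q0 q1 by (intro divide_right_mono) auto
      finally show ?thesis unfolding E_def .
    qed
    have "V m \<le> (\<Sum>j\<le>m+2. 512 * real m ^ 2 / 4^j * G (2^j / real m))" using Vup[OF m1] .
    also have "\<dots> \<le> (\<Sum>j\<le>m+2. D * P * q^j)" using tb unfolding M_def by (intro sum_mono) auto
    also have "\<dots> = D * P * (\<Sum>j\<le>m+2. q^j)" by (rule sum_distrib_left[symmetric])
    also have "\<dots> \<le> D * P * E" using geo D0 P0 by (intro mult_left_mono) auto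
    also have "\<dots> \<le> C * P" unfolding C_def using P0 by (simp add: algebra_simps)
    finally show ?thesis unfolding P_def M_def .
  qed
  have "eventually (\<lambda>m. V m \<le> C * (real m powr \<gamma> * L (real m))) sequentially"
    using ev by (rule eventually_mono) (rule hm)
  thus ?thesis using Cpos by blast
qed



theorem lemma2:
  fixes M :: "'a measure" and X :: "nat \<Rightarrow> 'a \<Rightarrow> real" and F :: "real measure"
    and \<gamma> :: real and L :: "real \<Rightarrow> real" and n :: "nat \<Rightarrow> nat"
  assumes "prob_space M"
    and "\<And>i. i \<ge> 1 \<Longrightarrow> X i \<in> borel_measurable M"
    and "\<And>i. i \<ge> 1 \<Longrightarrow> integrable M (\<lambda>\<omega>. (X i \<omega>)\<^sup>2)"
    and "\<And>i. i \<ge> 1 \<Longrightarrow> integral\<^sup>L M (X i) = 0"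
    and "spectral_measure_of M X F"
    and "0 < \<gamma>" "\<gamma> < 2"
    and "slowly_varying L"
    and "\<And>k. n k > 0" "mono n" "filterlim n at_top sequentially"
    and "\<exists>\<kappa>. \<forall>k. real (n (Suc k)) / real (n k) \<le> \<kappa>"
  shows "((\<exists>C>0. eventually (\<lambda>k. prob_space.variance M (\<lambda>\<omega>. \<Sum>i=1..n k. X i \<omega>)
                    \<le> C * (real (n k) powr \<gamma> * L (real (n k)))) sequentially)
          \<longleftrightarrow> (\<exists>C>0. \<exists>x0. 0 < x0 \<and> x0 \<le> pi \<and>
                 (\<forall>x. 0 < x \<and> x \<le> x0 \<longrightarrow> measure F {-x..x} \<le> C * (x powr (2 - \<gamma>) * L (1 / x)))))
       \<and> ((\<exists>C>0. \<exists>x0. 0 < x0 \<and> x0 \<le> pi \<and>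
                 (\<forall>x. 0 < x \<and> x \<le> x0 \<longrightarrow> measure F {-x..x} \<le> C * (x powr (2 - \<gamma>) * L (1 / x))))
          \<longleftrightarrow> (\<exists>C>0. eventually (\<lambda>m. prob_space.variance M (\<lambda>\<omega>. \<Sum>i=1..m. X i \<omega>)
                    \<le> C * (real m powr \<gamma> * L (real m))) sequentially))"
proof -
  define V where "V m = prob_space.variance M (\<lambda>\<omega>. \<Sum>i=1..m. X i \<omega>)" for m
  define G where "G x = measure F {-x..x}" for x
  have sF: "sets F = sets borel" and fF: "finite_measure F" and supp: "emeasure F (- {-pi..pi}) = 0"
    using assms(5) unfolding spectral_measure_of_def by auto
  have Vf: "V m = integral\<^sup>L F (K m)" for m
    unfolding V_def by (rule var_formula[OF assms(1-5)])
  have Vlow: "real m ^ 2 / 2 * G (1 / real m) \<le> V m" if "m \<ge> 1" for m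
    unfolding Vf G_def using K_bounds_F(1)[OF sF fF supp that] .
  have Vup: "V m \<le> (\<Sum>j\<le>m+2. 512 * real m ^ 2 / 4^j * G (2^j / real m))" if "m \<ge> 1" for m
    unfolding Vf G_def using K_bounds_F(2)[OF sF fF supp that] .
  have Gmono: "G x \<le> G y" if "0 < x" "x \<le> y" for x y
    unfolding G_def using that by (intro finite_measure.finite_measure_mono[OF fF]) (auto simp: sF)
  have Gnn: "0 \<le> G x" for x unfolding G_def by simp
  have Gt: "G x \<le> measure F (space F)" for x unfolding G_def by (rule finite_measure.bounded_measure[OF fF])
  let ?P1 = "\<exists>C>0. eventually (\<lambda>k. V (n k) \<le> C * (real (n k) powr \<gamma> * L (real (n k)))) sequentially"
  let ?P2 = "\<exists>C>0. \<exists>x0. 0 < x0 \<and> x0 \<le> pi \<and> (\<forall>x. 0 < x \<and> x \<le> x0 \<longrightarrow> G x \<le> C * (x powr (2 - \<gamma>) * L (1 / x)))"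
  let ?P3 = "\<exists>C>0. eventually (\<lambda>m. V m \<le> C * (real m powr \<gamma> * L (real m))) sequentially"
  have i12: "?P1 \<Longrightarrow> ?P2"
    by (rule imp12[OF assms(8,6,7) Vlow Gmono assms(9,10,11,12)])
  have i23: "?P2 \<Longrightarrow> ?P3"
    by (rule imp23[OF assms(8,6,7) Vup Gnn Gt])
  have i31: "?P1" if h3: "?P3"
  proof -
    obtain C where C: "C > 0" and ev: "eventually (\<lambda>m. V m \<le> C * (real m powr \<gamma> * L (real m))) sequentially"
      using h3 by blast
    have "eventually (\<lambda>k. V (n k) \<le> C * (real (n k) powr \<gamma> * L (real (n k)))) sequentially"
      using assms(11) ev unfolding filterlim_iff by blast
    thus ?thesis using C by blast
  qed
  have "(?P1 \<longleftrightarrow> ?P2) \<and> (?P2 \<longleftrightarrow> ?P3)" using i12 i23 i31 by blast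
  thus ?thesis unfolding V_def G_def .
qed

end
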